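(* Let $u$ be a one-sided Sturmian sequence with left special sequence $l=l_1l_2\dots$. In the HB diagram of $X_u^+$: if $l_1=0$, then there are arrows $0\to1$, $0\to00$ and $1\to10$; if $l_1=1$, then there are arrows $1\to0$, $1\to11$ and $0\to01$.
   Context: A sequence $u\in\{0,1\}^{\mathbb N}$ is Sturmian if for every $n\ge1$ exactly $n+1$ distinct blocks of length $n$ occur in $u$. $X_u^+$ is the closure of $\{\sigma^n u:n\in\mathbb N\}$, $\sigma$ the shift $(\sigma x)_i=x_{i+1}$, and $\tilde X_u=\{x\in\{0,1\}^{\mathbb Z}: x_px_{p+1}\dots\in X_u^+\ \forall p\}$; the languages of $u$, $X_u^+$, $\tilde X_u$ coincide. For each $n$ there is a unique block $L_n$ of length $n$ with $0L_n$ and $1L_n$ in the language; these are prefixes of the left special sequence $l$. For a block $a_{-n}\dots a_0$ in the language, $\mathrm{fol}(a_{-n}\dots a_0)=\{b_0b_1\dots\in X_u^+:\exists b\in\tilde X_u,\ b_{-n}\dots b_0=a_{-n}\dots a_0\}$. A block $a_{-n}\dots a_0$ ($n\ge1$) is significant if $\mathrm{fol}(a_{-n}\dots a_0)\subsetneq\mathrm{fol}(a_{-n+1}\dots a_0)$; $0$ and $1$ are also significant. $\mathrm{sig}(\cdot)$ is the longest significant suffix. The HB diagram has vertex set the significant blocks and an arrow $\alpha\to\beta$ iff there is a symbol $b$ with $\alpha b$ in the language and $\beta=\mathrm{sig}(\alpha b)$. *)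

theory Defs
  imports "HOL-Analysis.Analysis"
begin

text \<open>Sequences over the alphabet {0,1} are modelled as nat-valued functions; blocks as lists.
  The space nat \<Rightarrow> nat carries the product topology (Function_Topology).\<close>

definition lang :: "(nat \<Rightarrow> nat) \<Rightarrow> nat list set" where
  "lang u = {w. \<exists>n. w = map (\<lambda>i. u (n + i)) [0..<length w]}"

definition sturmian :: "(nat \<Rightarrow> nat) \<Rightarrow> bool" where
  "sturmian u \<longleftrightarrow> (\<forall>i. u i \<in> {0,1}) \<and>
     (\<forall>n\<ge>1. card {w \<in> lang u. length w = n} = n + 1)"

definition shift :: "(nat \<Rightarrow> nat) \<Rightarrow> nat \<Rightarrow> (nat \<Rightarrow> nat)" where
  "shift u n = (\<lambda>i. u (n + i))"

definition Xplus :: "(nat \<Rightarrow> nat) \<Rightarrow> (nat \<Rightarrow> nat) set" where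
  "Xplus u = closure {shift u n | n. True}"

definition Xtilde :: "(nat \<Rightarrow> nat) \<Rightarrow> (int \<Rightarrow> nat) set" where
  "Xtilde u = {x. \<forall>p::int. (\<lambda>i::nat. x (p + int i)) \<in> Xplus u}"

text \<open>For a block a = a_{-n} ... a_0 (list of length n+1, a!k = a_{k-n}):
  followers b_0 b_1 ... of bi-infinite points b with b_{-n}..b_0 = a.\<close>
definition fol :: "(nat \<Rightarrow> nat) \<Rightarrow> nat list \<Rightarrow> (nat \<Rightarrow> nat) set" where
  "fol u a = {y \<in> Xplus u. \<exists>b \<in> Xtilde u.
      (\<forall>k < length a. b (int k - int (length a - 1)) = a ! k) \<and>
      y = (\<lambda>i. b (int i))}"

definition significant :: "(nat \<Rightarrow> nat) \<Rightarrow> nat list \<Rightarrow> bool" where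
  "significant u w \<longleftrightarrow> w \<in> {[0], [1]} \<or>
     (length w \<ge> 2 \<and> w \<in> lang u \<and> fol u w \<subset> fol u (tl w))"

definition sig :: "(nat \<Rightarrow> nat) \<Rightarrow> nat list \<Rightarrow> nat list" where
  "sig u w = drop (LEAST k. significant u (drop k w)) w"

definition HB_arrow :: "(nat \<Rightarrow> nat) \<Rightarrow> nat list \<Rightarrow> nat list \<Rightarrow> bool" where
  "HB_arrow u \<alpha> \<beta> \<longleftrightarrow> significant u \<alpha> \<and> significant u \<beta> \<and>
     (\<exists>b. \<alpha> @ [b] \<in> lang u \<and> \<beta> = sig u (\<alpha> @ [b]))"

text \<open>l = l_1 l_2 ... (indexed from 1) is the left special sequence: for every n,
  L_n = l_1 ... l_n satisfies 0 L_n, 1 L_n in the language.\<close>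
definition left_special_seq :: "(nat \<Rightarrow> nat) \<Rightarrow> (nat \<Rightarrow> nat) \<Rightarrow> bool" where
  "left_special_seq u l \<longleftrightarrow> (\<forall>n. (0 # map l [1..<n+1]) \<in> lang u \<and> (1 # map l [1..<n+1]) \<in> lang u)"

end

theory Submission imports Defs begin

lemma closure_cyl:
  fixes S :: "(nat \<Rightarrow> nat) set"
  shows "x \<in> closure S \<longleftrightarrow> (\<forall>n. \<exists>s\<in>S. \<forall>i<n. s i = x i)"
proof
  assume x: "x \<in> closure S"
  show "\<forall>n. \<exists>s\<in>S. \<forall>i<n. s i = x i"
  proof
    fix n
    let ?C = "{f::nat\<Rightarrow>nat. \<forall>i\<in>{..<n}. f ((\<lambda>i. i) i) \<in> (\<lambda>i. {x i}) i}"
    have o: "open ?C"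
      by (rule product_topology_basis') (auto simp: open_discrete)
    have "x \<in> ?C" by auto
    hence "?C \<inter> closure S \<noteq> {}" using x by auto
    hence "?C \<inter> S \<noteq> {}" using open_Int_closure_eq_empty[OF o] by auto
    thus "\<exists>s\<in>S. \<forall>i<n. s i = x i" by auto
  qed
next
  assume H: "\<forall>n. \<exists>s\<in>S. \<forall>i<n. s i = x i"
  show "x \<in> closure S"
    unfolding closure_iff_nhds_not_empty
  proof (intro allI impI)
    fix A T assume TA: "T \<subseteq> A" and oT: "open T" and xT: "x \<in> T"
    from oT xT obtain U where fin: "finite {i \<in> UNIV. U i \<noteq> topspace euclidean}"
      and xU: "x \<in> Pi\<^sub>E UNIV U" and UT: "Pi\<^sub>E UNIV U \<subseteq> T"
      unfolding open_fun_def openin_product_topology_alt by blast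
    from fin obtain k where k: "{i \<in> UNIV. U i \<noteq> topspace euclidean} \<subseteq> {..<k}"
      using finite_nat_bounded by blast
    from H obtain s where s: "s \<in> S" "\<forall>i<k. s i = x i" by blast
    have "s \<in> Pi\<^sub>E UNIV U"
    proof -
      have "s i \<in> U i" for i
      proof (cases "i < k")
        case True thus ?thesis using s xU by (auto simp: PiE_def Pi_def)
      next
        case False thus ?thesis using k by auto
      qed
      thus ?thesis by (auto simp: PiE_def Pi_def)
    qed
    thus "S \<inter> A \<noteq> {}" using UT TA s(1) by blast
  qed
qed


definition wd :: "(nat \<Rightarrow> nat) \<Rightarrow> nat \<Rightarrow> nat \<Rightarrow> nat list" where
  "wd u p n = map (\<lambda>i. u (p + i)) [0..<n]"

definition LL :: "(nat \<Rightarrow> nat) \<Rightarrow> nat \<Rightarrow> nat list set" where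
  "LL u n = {w \<in> lang u. length w = n}"

lemma length_wd[simp]: "length (wd u p n) = n" by (simp add: wd_def)

lemma nth_wd[simp]: "i < n \<Longrightarrow> wd u p n ! i = u (p + i)" by (simp add: wd_def)

lemma lang_iff: "w \<in> lang u \<longleftrightarrow> (\<exists>p. w = wd u p (length w))"
  by (simp add: lang_def wd_def)

lemma wd_in_lang[simp]: "wd u p n \<in> lang u"
  by (auto simp: lang_iff)

lemma LL_eq: "LL u n = range (\<lambda>p. wd u p n)"
  by (auto simp: LL_def lang_iff)

lemma take_wd: "m \<le> n \<Longrightarrow> take m (wd u p n) = wd u p m"
  by (simp add: wd_def take_map)

lemma drop_wd: "drop m (wd u p n) = wd u (p + m) (n - m)"
  by (auto simp: wd_def drop_map intro!: nth_equalityI simp: add.assoc)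

lemma wd_Suc: "wd u p (Suc n) = u p # wd u (Suc p) n"
  by (simp add: wd_def upt_conv_Cons map_Suc_upt[symmetric] o_def del: upt_Suc)

lemma wd_eq_iff: "wd u p n = wd v q n \<longleftrightarrow> (\<forall>i<n. u (p+i) = v (q+i))"
  by (auto simp: wd_def)

lemma finite_LL:
  assumes "\<forall>i. v i \<in> {0,1}"
  shows "finite (LL v n)"
proof -
  have "LL v n \<subseteq> {xs. set xs \<subseteq> {0,1} \<and> length xs = n}"
  proof
    fix w assume "w \<in> LL v n"
    then obtain p where "w = wd v p n" by (auto simp: LL_eq)
    moreover have "set (wd v p n) \<subseteq> {0,1}" unfolding wd_def using assms by (simp only: set_map set_upt image_subset_iff) blast
    ultimately show "w \<in> {xs. set xs \<subseteq> {0,1} \<and> length xs = n}" by simp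
  qed
  thus ?thesis by (rule finite_subset) (rule finite_lists_length_eq, simp)
qed

lemma per_iter:
  fixes v :: "nat \<Rightarrow> nat" and k :: nat
  assumes "\<forall>i\<ge>N. v (i + P) = v i" "j \<ge> N"
  shows "v (j + k * P) = v j"
proof (induction k)
  case (Suc k)
  have "v (j + Suc k * P) = v ((j + k * P) + P)" by (simp add: algebra_simps)
  also have "\<dots> = v (j + k * P)" using assms by auto
  finally show ?case using Suc by simp
qed simp

lemma evper_card:
  fixes v :: "nat \<Rightarrow> nat"
  assumes "P > 0" "\<forall>i\<ge>N. v (i + P) = v i"
  shows "card (LL v n) \<le> N + P"
proof -
  define red where "red p = (if p < N then p else N + (p - N) mod P)" for p
  have "wd v p n = wd v (red p) n" for p
  proof (cases "p < N")
    case False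
    have "v (p + i) = v (red p + i)" for i
    proof -
      have "p + i = (red p + i) + ((p - N) div P) * P"
        using False by (simp add: red_def)
      thus ?thesis using per_iter[OF assms(2), of "red p + i" "(p - N) div P"] False
        by (simp add: red_def)
    qed
    thus ?thesis by (simp add: wd_eq_iff)
  qed (simp add: red_def)
  moreover have "red p < N + P" for p using assms(1) by (simp add: red_def)
  ultimately have "LL v n \<subseteq> (\<lambda>p. wd v p n) ` {..<N+P}"
    unfolding LL_eq by auto
  hence "card (LL v n) \<le> card ((\<lambda>p. wd v p n) ` {..<N+P})"
    by (intro card_mono) auto
  also have "\<dots> \<le> N + P" using card_image_le[of "{..<N+P}"] by simp
  finally show ?thesis .
qed

lemma card_LL0: "card (LL v 0) = 1"
proof -
  have "LL v 0 = {[]}" by (auto simp: LL_eq wd_def)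
  thus ?thesis by simp
qed

lemma MH:
  assumes bin: "\<forall>i. v i \<in> {0,1}" and n: "card (LL v n) \<le> n"
  shows "\<exists>N P. P > 0 \<and> (\<forall>i\<ge>N. v (i + P) = v i)"
proof -
  have "\<exists>m<n. card (LL v (Suc m)) \<le> card (LL v m)"
  proof (rule ccontr)
    assume "\<not> ?thesis"
    hence gt: "\<And>m. m < n \<Longrightarrow> card (LL v (Suc m)) > card (LL v m)" by auto
    have "k \<le> n \<Longrightarrow> card (LL v k) \<ge> k + 1" for k
    proof (induction k)
      case 0 thus ?case by (simp add: card_LL0)
    next
      case (Suc k) thus ?case using gt[of k] by simp
    qed
    thus False using n by (metis le_refl not_less_eq_eq Suc_eq_plus1)
  qed
  then obtain m where m: "card (LL v (Suc m)) \<le> card (LL v m)" by blast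
  have fin: "finite (LL v k)" for k by (rule finite_LL[OF bin])
  have im: "take m ` LL v (Suc m) = LL v m"
  proof
    show "take m ` LL v (Suc m) \<subseteq> LL v m" by (auto simp: LL_eq take_wd)
    show "LL v m \<subseteq> take m ` LL v (Suc m)"
    proof
      fix w assume "w \<in> LL v m"
      then obtain p where "w = wd v p m" by (auto simp: LL_eq)
      hence "w = take m (wd v p (Suc m))" by (simp add: take_wd)
      thus "w \<in> take m ` LL v (Suc m)" by (auto simp: LL_eq)
    qed
  qed
  have "card (take m ` LL v (Suc m)) = card (LL v (Suc m))"
    using im m card_image_le[OF fin, of "take m" "Suc m"] by simp
  hence inj: "inj_on (take m) (LL v (Suc m))"
    using inj_on_iff_eq_card[OF fin] by blast
  have "\<not> inj_on (\<lambda>p. wd v p m) {..card (LL v m)}"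
  proof (rule pigeonhole)
    have "(\<lambda>p. wd v p m) ` {..card (LL v m)} \<subseteq> LL v m" by (auto simp: LL_eq)
    hence "card ((\<lambda>p. wd v p m) ` {..card (LL v m)}) \<le> card (LL v m)"
      by (rule card_mono[OF fin])
    thus "card ((\<lambda>p. wd v p m) ` {..card (LL v m)}) < card {..card (LL v m)}" by simp
  qed
  then obtain i j where ij: "i \<le> card (LL v m)" "j \<le> card (LL v m)" "i \<noteq> j"
    "wd v i m = wd v j m"
    unfolding inj_on_def by blast
  then obtain i j where ij: "i < j" "wd v i m = wd v j m"
    by (metis linorder_neqE_nat)
  have key: "wd v (i + t) m = wd v (j + t) m \<and> v (i + t) = v (j + t)" for t
  proof (induction t)
    case 0
    have "wd v i (Suc m) = wd v j (Suc m)"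
      by (rule inj_onD[OF inj]) (use ij in \<open>auto simp: take_wd LL_eq\<close>)
    then show ?case using ij by (simp add: wd_Suc)
  next
    case (Suc t)
    have "wd v (i + t) (Suc m) = wd v (j + t) (Suc m)"
      by (rule inj_onD[OF inj]) (use Suc.IH in \<open>auto simp: take_wd LL_eq\<close>)
    hence e1: "drop 1 (wd v (i + t) (Suc m)) = drop 1 (wd v (j + t) (Suc m))" by simp
    hence e2: "wd v (i + Suc t) m = wd v (j + Suc t) m" by (simp add: drop_wd)
    have "wd v (i + Suc t) (Suc m) = wd v (j + Suc t) (Suc m)"
      by (rule inj_onD[OF inj]) (use e2 in \<open>auto simp: take_wd LL_eq\<close>)
    then show ?case using e2 by (simp add: wd_Suc)
  qed
  show ?thesis
  proof (intro exI conjI allI impI)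
    show "j - i > 0" using ij by simp
    fix k assume "k \<ge> i"
    then obtain t where "k = i + t" using le_Suc_ex by blast
    thus "v (k + (j - i)) = v k" using key[of t] ij by (simp add: algebra_simps)
  qed
qed


lemma st_bin: "sturmian u \<Longrightarrow> u i \<in> {0,1}"
  by (simp add: sturmian_def)

lemma st_card: "sturmian u \<Longrightarrow> card (LL u n) = n + 1"
proof (cases "n = 0")
  case True thus ?thesis using card_LL0[of u] by simp
qed (auto simp: sturmian_def LL_def)

lemma st_fin: "sturmian u \<Longrightarrow> finite (LL u n)"
  by (rule finite_LL) (simp add: sturmian_def)

lemma not_evper:
  assumes "sturmian u" "P > 0" "\<forall>i\<ge>N. u (i + P) = u i"
  shows False
  using evper_card[OF assms(2,3), of "N+P"] st_card[OF assms(1), of "N+P"] by simp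

lemma recur:
  assumes st: "sturmian u" and w: "w \<in> lang u"
  shows "\<exists>p\<ge>k. w = wd u p (length w)"
proof (rule ccontr)
  assume no: "\<not> ?thesis"
  define v where "v = (\<lambda>i. u (k + i))"
  define n where "n = length w"
  have wv: "wd v p m = wd u (k + p) m" for p m by (simp add: v_def wd_def add.assoc)
  have "LL v n \<subseteq> LL u n - {w}"
    apply (auto simp: LL_eq wv n_def)
    using no le_add1 by metis
  hence "card (LL v n) \<le> card (LL u n - {w})"
    by (intro card_mono) (auto intro: st_fin[OF st])
  also have "\<dots> = n" using st_card[OF st, of n] w st_fin[OF st, of n]
    by (simp add: LL_def n_def)
  finally have "card (LL v n) \<le> n" .
  moreover have "\<forall>i. v i \<in> {0,1}" using st_bin[OF st] by (simp add: v_def)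
  ultimately obtain N P where NP: "P > 0" "\<forall>i\<ge>N. v (i + P) = v i"
    using MH by blast
  have "\<forall>i\<ge>k+N. u (i + P) = u i"
  proof (intro allI impI)
    fix i assume "i \<ge> k + N"
    define j where "j = i - k"
    have "i = k + j" "j \<ge> N" using \<open>i \<ge> k + N\<close> by (auto simp: j_def)
    thus "u (i + P) = u i" using NP(2) by (auto simp: v_def add.assoc)
  qed
  thus False using not_evper[OF st NP(1)] by blast
qed

lemma factor:
  assumes "v \<in> lang u" "s + n \<le> length v"
  shows "take n (drop s v) \<in> lang u"
proof -
  obtain q L where qL: "v = wd u q L" "L = length v" using assms(1) by (auto simp: lang_iff)
  hence "take n (drop s v) = take n (wd u (q + s) (length v - s))"
    using drop_wd[of s u q L] by simp
  also have "\<dots> = wd u (q + s) n" using assms(2) by (simp add: take_wd)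
  finally show ?thesis by simp
qed

lemma bi_ext:
  assumes st: "sturmian u" and w: "w \<in> lang u"
  shows "\<exists>a e. a # w @ [e] \<in> lang u"
proof -
  obtain p where p: "p \<ge> 1" "w = wd u p (length w)" using recur[OF st w, of 1] by blast
  have "wd u (p - 1) (Suc (Suc (length w))) = u (p - 1) # wd u p (Suc (length w))"
    using p(1) by (simp add: wd_Suc)
  also have "wd u p (Suc (length w)) = wd u p (length w) @ [u (p + length w)]"
    by (simp add: wd_def)
  finally have "u (p - 1) # w @ [u (p + length w)] \<in> lang u"
    using p(2) wd_in_lang[of u "p - 1" "Suc (Suc (length w))"] by simp
  thus ?thesis by blast
qed

lemma lsp_unique:
  assumes st: "sturmian u" and len: "length x = length y"
    and x: "0 # x \<in> lang u" "1 # x \<in> lang u"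
    and y: "0 # y \<in> lang u" "1 # y \<in> lang u"
  shows "x = y"
proof (rule ccontr)
  assume ne: "x \<noteq> y"
  define n where "n = length x"
  define g where "g w = (SOME a. a # w \<in> lang u) # w" for w
  have gl: "g w \<in> LL u (Suc n)" if "w \<in> LL u n" for w
  proof -
    from that have wl: "w \<in> lang u" "length w = n" by (auto simp: LL_def)
    obtain a e where "a # w @ [e] \<in> lang u" using bi_ext[OF st wl(1)] by blast
    hence "take (Suc n) (drop 0 (a # w @ [e])) \<in> lang u"
      by (rule factor) (simp add: wl)
    hence "a # w \<in> lang u" using wl by simp
    hence "g w \<in> lang u" unfolding g_def by (rule someI)
    thus ?thesis using wl by (simp add: LL_def g_def)
  qed
  have ginj: "inj_on g (LL u n)" by (rule inj_onI) (simp add: g_def)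
  define e1 where "e1 = (if g x = 0 # x then 1 # x else 0 # x)"
  define e2 where "e2 = (if g y = 0 # y then 1 # y else 0 # y)"
  have e1n: "e1 \<notin> g ` LL u n"
  proof
    assume "e1 \<in> g ` LL u n"
    then obtain z where "e1 = g z" by blast
    hence "z = x" by (simp add: e1_def g_def split: if_splits)
    thus False using \<open>e1 = g z\<close> by (simp add: e1_def g_def split: if_splits)
  qed
  have e2n: "e2 \<notin> g ` LL u n"
  proof
    assume "e2 \<in> g ` LL u n"
    then obtain z where "e2 = g z" by blast
    hence "z = y" by (simp add: e2_def g_def split: if_splits)
    thus False using \<open>e2 = g z\<close> by (simp add: e2_def g_def split: if_splits)
  qed
  have e12: "e1 \<noteq> e2" using ne by (simp add: e1_def e2_def)
  have sub: "g ` LL u n \<union> {e1, e2} \<subseteq> LL u (Suc n)"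
    using gl x y len by (auto simp: e1_def e2_def LL_def n_def)
  have "card (g ` LL u n \<union> {e1, e2}) = card (g ` LL u n) + 2"
    using e1n e2n e12 st_fin[OF st, of n] by (simp add: card_insert_if)
  also have "card (g ` LL u n) = n + 1"
    using card_image[OF ginj] st_card[OF st] by simp
  finally have "n + 3 \<le> card (LL u (Suc n))"
    using card_mono[OF st_fin[OF st] sub] by simp
  thus False using st_card[OF st, of "Suc n"] by simp
qed

lemma two_conts:
  assumes st: "sturmian u" and w: "w \<in> lang u"
  shows "\<exists>x y. length x = length y \<and> x \<noteq> y \<and> w @ x \<in> lang u \<and> w @ y \<in> lang u"
proof (rule ccontr)
  assume no: "\<not> ?thesis"
  obtain p where p: "w = wd u p (length w)" using w by (auto simp: lang_iff)
  obtain q where q: "q \<ge> p + 1" "w = wd u q (length w)" using recur[OF st w] by blast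
  have cat0: "wd u r m @ wd u (r + m) n = wd u r (m + n)" for r m n
    by (auto simp: wd_def intro!: nth_equalityI simp: nth_append add.assoc)
  have cat: "w @ wd u (r + length w) n = wd u r (length w + n)" if "w = wd u r (length w)" for r n
    using cat0[of r "length w" n] that by simp
  have eq: "wd u (p + length w) n = wd u (q + length w) n" for n
  proof (rule ccontr)
    assume "wd u (p + length w) n \<noteq> wd u (q + length w) n"
    moreover have "w @ wd u (p + length w) n \<in> lang u" using cat[OF p, of n] by (metis wd_in_lang)
    moreover have "w @ wd u (q + length w) n \<in> lang u" using cat[OF q(2), of n] by (metis wd_in_lang)
    ultimately show False using no by (metis length_wd)
  qed
  have "u (p + i) = u (q + i)" for i
  proof (cases "i < length w")
    case True
    have "u (p + i) = w ! i" using True nth_wd[OF True, of u p] p by simp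
    also have "\<dots> = u (q + i)" using True nth_wd[OF True, of u q] q(2) by simp
    finally show ?thesis .
  next
    case False
    define j where "j = i - length w"
    have "i = length w + j" using False by (simp add: j_def)
    thus ?thesis using eq[of "Suc j"] unfolding wd_eq_iff by (auto simp: add.assoc)
  qed
  hence "\<forall>i\<ge>p. u (i + (q - p)) = u i"
  proof (intro allI impI)
    fix i assume "i \<ge> p" and H: "\<And>i. u (p + i) = u (q + i)"
    have "u (i + (q - p)) = u (q + (i - p))" using \<open>i \<ge> p\<close> q(1) by (simp add: algebra_simps)
    also have "\<dots> = u (p + (i - p))" using H by simp
    also have "\<dots> = u i" using \<open>i \<ge> p\<close> by simp
    finally show "u (i + (q - p)) = u i" .
  qed
  moreover have "q - p > 0" using q(1) by simp
  ultimately show False using not_evper[OF st] by blast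
qed

lemma word_P:
  assumes st: "sturmian u" and c: "c \<in> {0,1}" and ca: "[c, a] \<in> lang u"
  shows "\<exists>x. x \<noteq> [] \<and> hd x = a \<and> c # x \<in> lang u \<and> (1 - c) # x \<notin> lang u"
proof (rule ccontr)
  assume no: "\<not> ?thesis"
  obtain x y where xy: "length x = length y" "x \<noteq> y" "[c, a] @ x \<in> lang u" "[c, a] @ y \<in> lang u"
    using two_conts[OF st ca] by blast
  have N: "\<And>z. z \<noteq> [] \<Longrightarrow> hd z = a \<Longrightarrow> c # z \<in> lang u \<Longrightarrow> (1 - c) # z \<in> lang u"
    using no by blast
  have "(1 - c) # a # x \<in> lang u" using xy(3) by (intro N) auto
  moreover have "(1 - c) # a # y \<in> lang u" using xy(4) by (intro N) auto
  ultimately have "a # x = a # y"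
    using c xy by (intro lsp_unique[OF st]) auto
  thus False using xy(2) by simp
qed


lemma Xplus_iff: "x \<in> Xplus u \<longleftrightarrow> (\<forall>n. wd x 0 n \<in> lang u)"
proof -
  have "(\<exists>s\<in>{shift u m |m. True}. \<forall>i<n. s i = x i) \<longleftrightarrow> wd x 0 n \<in> lang u" for n
  proof
    assume "\<exists>s\<in>{shift u m |m. True}. \<forall>i<n. s i = x i"
    then obtain m where "\<forall>i<n. u (m + i) = x i" by (auto simp: shift_def)
    hence "wd x 0 n = wd u m n" by (simp add: wd_eq_iff)
    thus "wd x 0 n \<in> lang u" by simp
  next
    assume "wd x 0 n \<in> lang u"
    then obtain m where "wd x 0 n = wd u m n" by (auto simp: lang_iff)
    hence "\<forall>i<n. shift u m i = x i" by (simp add: wd_eq_iff shift_def)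
    thus "\<exists>s\<in>{shift u m |m. True}. \<forall>i<n. s i = x i" by blast
  qed
  thus ?thesis unfolding Xplus_def closure_cyl by simp
qed

lemma Xtilde_iff: "b \<in> Xtilde u \<longleftrightarrow> (\<forall>p n. map (\<lambda>i. b (p + int i)) [0..<n] \<in> lang u)"
  by (simp add: Xtilde_def Xplus_iff wd_def)

lemma Xtilde_win: "b \<in> Xtilde u \<Longrightarrow> map (\<lambda>i. b (p + int i)) [0..<n] \<in> lang u"
  by (simp add: Xtilde_iff)

lemma Xtilde_bin:
  assumes st: "sturmian u" and b: "b \<in> Xtilde u"
  shows "b z \<in> {0,1}"
proof -
  have "[b z] \<in> lang u" using Xtilde_win[OF b, of z 1] by simp
  then obtain p where "[b z] = wd u p 1" by (auto simp: lang_iff)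
  hence "b z = u p" by (simp add: wd_def)
  thus ?thesis using st_bin[OF st] by simp
qed

lemma point:
  assumes st: "sturmian u" and w: "w \<in> lang u" "w \<noteq> []"
  shows "\<exists>b\<in>Xtilde u. \<forall>j<length w. b (int j - 1) = w ! j"
proof -
  define ext where "ext v = (SOME z. \<exists>a e. z = a # v @ [e] \<and> z \<in> lang u)" for v
  have ext: "\<exists>a e. ext v = a # v @ [e] \<and> ext v \<in> lang u" if vl: "v \<in> lang u" for v
  proof -
    obtain a e where "a # v @ [e] \<in> lang u" using bi_ext[OF st vl] by blast
    hence "\<exists>z. \<exists>a e. z = a # v @ [e] \<and> z \<in> lang u" by blast
    from someI_ex[OF this] show ?thesis unfolding ext_def by blast
  qed
  define W where "W k = (ext ^^ k) w" for k
  have WS: "W (Suc k) = ext (W k)" for k by (simp add: W_def)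
  have Wl: "W k \<in> lang u \<and> length (W k) = length w + 2 * k" for k
  proof (induction k)
    case 0 thus ?case using w by (simp add: W_def)
  next
    case (Suc k)
    then obtain a e where e1: "ext (W k) = a # W k @ [e]" and e2: "ext (W k) \<in> lang u"
      using ext by blast
    have "W (Suc k) \<in> lang u" using e2 by (simp only: WS)
    moreover have "length (W (Suc k)) = length w + 2 * Suc k" using e1 Suc by (simp add: WS)
    ultimately show ?case by blast
  qed
  have Wsh: "i < length (W k) \<Longrightarrow> W (k + m) ! (i + m) = W k ! i" for i k m
  proof (induction m)
    case (Suc m)
    obtain a e where ae: "W (Suc (k + m)) = a # W (k + m) @ [e]" using ext Wl WS by metis
    have "i + m < length (W (k + m))" using Suc.prems Wl by simp
    thus ?case using Suc ae by (simp add: nth_append)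
  qed simp
  define valid where "valid k z \<longleftrightarrow> 0 \<le> z + 1 + int k \<and> nat (z + 1 + int k) < length w + 2 * k"
    for k and z :: int
  have mono: "W k' ! nat (z + 1 + int k') = W k ! nat (z + 1 + int k)"
    if vk: "valid k z" and kk: "k \<le> k'" for k k' z
  proof -
    obtain d where d: "k' = k + d" using kk le_Suc_ex by blast
    have "nat (z + 1 + int k') = nat (z + 1 + int k) + d" using vk d unfolding valid_def by (simp add: nat_eq_iff)
    thus ?thesis using Wsh[of "nat (z + 1 + int k)" k d] vk Wl d by (simp add: valid_def)
  qed
  have same: "W k' ! nat (z + 1 + int k') = W k ! nat (z + 1 + int k)"
    if "valid k z" "valid k' z" for k k' z
  proof (cases "k \<le> k'")
    case True thus ?thesis using mono that by blast
  next
    case False thus ?thesis using mono[of k' z k] that by simp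
  qed
  define K where "K z = nat \<bar>z\<bar> + 1" for z :: int
  define b where "b z = W (K z) ! nat (z + 1 + int (K z))" for z
  have Kv: "valid (K z) z" for z using w(2) by (cases w) (auto simp: valid_def K_def)
  have bv: "b z = W k ! nat (z + 1 + int k)" if "valid k z" for k z
    using same[OF that Kv] by (simp add: b_def)
  show ?thesis
  proof (intro bexI allI impI)
    fix j assume "j < length w"
    hence "valid 0 (int j - 1)" by (simp add: valid_def)
    thus "b (int j - 1) = w ! j" using bv by (simp add: W_def)
  next
    show "b \<in> Xtilde u" unfolding Xtilde_iff
    proof (intro allI)
      fix p :: int and n :: nat
      define k where "k = nat \<bar>p\<bar> + n + 1"
      define s where "s = nat (p + 1 + int k)"
      have vk: "valid k (p + int i)" if "i < n" for i
        using that w(2) by (cases w) (auto simp: valid_def k_def)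
      have sn: "s + n \<le> length (W k)" using Wl by (simp add: s_def k_def)
      have "map (\<lambda>i. b (p + int i)) [0..<n] = take n (drop s (W k))"
      proof (rule nth_equalityI)
        show "length (map (\<lambda>i. b (p + int i)) [0..<n]) = length (take n (drop s (W k)))"
          using sn by simp
        fix i assume "i < length (map (\<lambda>i. b (p + int i)) [0..<n])"
        hence i: "i < n" by simp
        have "nat (p + int i + 1 + int k) = s + i" using vk[OF i]
          by (simp add: s_def k_def)
        thus "map (\<lambda>i. b (p + int i)) [0..<n] ! i = take n (drop s (W k)) ! i"
          using bv[OF vk[OF i]] i sn by simp
      qed
      also have "\<dots> \<in> lang u" using factor[OF _ sn] Wl by blast
      finally show "map (\<lambda>i. b (p + int i)) [0..<n] \<in> lang u" .
    qed
  qed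
qed


lemma fol1: "fol u [a] = {y \<in> Xplus u. \<exists>b\<in>Xtilde u. b 0 = a \<and> y = (\<lambda>i. b (int i))}"
  by (simp add: fol_def)

lemma fol2: "fol u [d, a] = {y \<in> Xplus u. \<exists>b\<in>Xtilde u. b (-1) = d \<and> b 0 = a \<and> y = (\<lambda>i. b (int i))}"
proof -
  have A: "(\<forall>k<2. P k) \<longleftrightarrow> P 0 \<and> P (1::nat)" for P
  proof
    assume "P 0 \<and> P 1"
    thus "\<forall>k<2. P k" by (metis One_nat_def less_2_cases)
  qed simp
  have H: "(\<forall>k<length [d, a]. b (int k - int (length [d, a] - 1)) = [d, a] ! k) \<longleftrightarrow> b (-1) = d \<and> b 0 = a"
    for b :: "int \<Rightarrow> nat"
    using A[of "\<lambda>k. b (int k - 1) = [d, a] ! k"] by (simp add: numeral_2_eq_2)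
  show ?thesis unfolding fol_def H by blast
qed

lemma strictA:
  assumes st: "sturmian u" and x: "x \<noteq> []" "hd x = a" and dx: "d # x \<in> lang u"
    and ex: "e # x \<notin> lang u"
  shows "\<exists>y. y \<in> fol u [a] \<and> y \<notin> fol u [e, a]"
proof -
  obtain b where b: "b \<in> Xtilde u" and bj: "\<forall>j<length (d # x). b (int j - 1) = (d # x) ! j"
    using point[OF st dx] by blast
  have bx: "b (int t) = x ! t" if "t < length x" for t
    using bj[rule_format, of "Suc t"] that by simp
  define y where "y = (\<lambda>i. b (int i))"
  have yX: "y \<in> Xplus u" unfolding Xplus_iff
    using Xtilde_win[OF b, of 0] by (simp add: wd_def y_def)
  have b0: "b 0 = a" using bx[of 0] x by (cases x) auto
  have "y \<in> fol u [a]" using yX b b0 by (auto simp: fol1 y_def)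
  moreover have "y \<notin> fol u [e, a]"
  proof
    assume "y \<in> fol u [e, a]"
    then obtain b' where b': "b' \<in> Xtilde u" "b' (-1) = e" "y = (\<lambda>i. b' (int i))"
      by (auto simp: fol2)
    have "map (\<lambda>i. b' (-1 + int i)) [0..<Suc (length x)] = e # x"
    proof (rule nth_equalityI)
      fix i assume "i < length (map (\<lambda>i. b' (-1 + int i)) [0..<Suc (length x)])"
      hence i: "i < Suc (length x)" by simp
      show "map (\<lambda>i. b' (-1 + int i)) [0..<Suc (length x)] ! i = (e # x) ! i"
      proof (cases i)
        case 0 thus ?thesis using b'(2) by (simp add: upt_conv_Cons del: upt_Suc)
      next
        case (Suc t)
        have "b' (int t) = y t" using b'(3) by simp
        also have "\<dots> = x ! t" using bx[of t] i Suc by (simp add: y_def)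
        finally show ?thesis using i Suc by (simp del: upt_Suc)
      qed
    qed simp
    thus False using Xtilde_win[OF b'(1), of "-1" "Suc (length x)"] ex by simp
  qed
  ultimately show ?thesis by blast
qed

lemma subB: "fol u [d, a] \<subseteq> fol u [a]"
  by (auto simp: fol1 fol2)

lemma subC:
  assumes st: "sturmian u" and d: "d \<in> {0,1}" and no: "[1 - d, a] \<notin> lang u"
  shows "fol u [a] \<subseteq> fol u [d, a]"
proof
  fix y assume "y \<in> fol u [a]"
  then obtain b where b: "y \<in> Xplus u" "b \<in> Xtilde u" "b 0 = a" "y = (\<lambda>i. b (int i))"
    by (auto simp: fol1)
  have "map (\<lambda>i. b (-1 + int i)) [0..<2] = [b (-1), b 0]" by (simp add: numeral_2_eq_2)
  hence "[b (-1), a] \<in> lang u" using Xtilde_win[OF b(2), of "-1" 2] b(3) by simp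
  moreover have "b (-1) \<in> {0,1}" by (rule Xtilde_bin[OF st b(2)])
  ultimately have "b (-1) = d" using no d by auto
  thus "y \<in> fol u [d, a]" using b by (auto simp: fol2)
qed

lemma sig_drop1:
  assumes "\<not> significant u [x, y]" "significant u [y]"
  shows "sig u [x, y] = [y]"
proof -
  have "(LEAST k. significant u (drop k [x, y])) = 1"
  proof (rule Least_equality)
    show "significant u (drop 1 [x, y])" using assms(2) by simp
    fix k assume "significant u (drop k [x, y])"
    thus "1 \<le> k" using assms(1) by (cases k) auto
  qed
  thus ?thesis by (simp add: sig_def)
qed

lemma sig_self: "significant u w \<Longrightarrow> sig u w = w"
  by (simp add: sig_def Least_eq_0)

lemma walk: "u p = a \<Longrightarrow> u (p + d + 1) \<noteq> a \<Longrightarrow> \<exists>r. u r = a \<and> u (Suc r) \<noteq> a"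
proof (induction d arbitrary: p)
  case 0 thus ?case by auto
next
  case (Suc d)
  show ?case
  proof (cases "u (Suc p) = a")
    case True thus ?thesis using Suc.IH[of "Suc p"] Suc.prems by simp
  next
    case False thus ?thesis using Suc.prems by blast
  qed
qed

lemma main_a:
  assumes st: "sturmian u" and a: "a \<in> {0,1}" and l0: "[0, a] \<in> lang u" and l1: "[1, a] \<in> lang u"
  shows "HB_arrow u [a] [1 - a] \<and> HB_arrow u [a] [a, a] \<and> HB_arrow u [1 - a] [1 - a, a]"
proof -
  define e where "e = 1 - a"
  have e: "e \<in> {0,1}" "e \<noteq> a" "1 - e = a" using a by (auto simp: e_def)
  have aa: "[a, a] \<in> lang u" and ea: "[e, a] \<in> lang u" using a l0 l1 by (auto simp: e_def)
  have LL1: "LL u 1 = {[0], [1]}"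
  proof (rule card_subset_eq)
    show "LL u 1 \<subseteq> {[0], [1]}"
    proof
      fix w assume "w \<in> LL u 1"
      then obtain p where "w = wd u p 1" by (auto simp: LL_eq)
      thus "w \<in> {[0], [1]}" using st_bin[OF st, of p] by (auto simp: wd_def)
    qed
    show "card (LL u 1) = card {[0::nat], [1]}" using st_card[OF st, of 1] by simp
  qed simp
  have "[e] \<in> lang u" using LL1 e(1) by (auto simp: LL_def)
  obtain p where p: "[a, a] = wd u p (length [a, a])" using aa lang_iff by blast
  hence up: "u p = a" by (simp add: wd_def)
  obtain q where q: "q \<ge> p + 1" "[e] = wd u q 1" using recur[OF st \<open>[e] \<in> lang u\<close>, of "p + 1"] by auto
  have uq: "u q = e" using q(2) by (simp add: wd_def)
  obtain r where r: "u r = a" "u (Suc r) \<noteq> a"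
    using walk[of u p a "q - p - 1"] up uq q(1) e(2) by auto
  have "u (Suc r) = e" using r(2) st_bin[OF st, of "Suc r"] a by (auto simp: e_def)
  hence "wd u r 2 = [a, e]" using r(1) by (simp add: wd_def numeral_2_eq_2)
  hence ae: "[a, e] \<in> lang u" by (metis wd_in_lang)
  have ee: "[e, e] \<notin> lang u"
  proof
    assume ee: "[e, e] \<in> lang u"
    have "[a] = [e]"
    proof (rule lsp_unique[OF st])
      show "0 # [a] \<in> lang u" "1 # [a] \<in> lang u" using aa ea e a by (auto simp: e_def)
      show "0 # [e] \<in> lang u" "1 # [e] \<in> lang u" using ae ee e a by (auto simp: e_def)
    qed simp
    thus False using e(2) by simp
  qed
  have sa: "significant u [a]" and se: "significant u [e]" using a e(1) by (auto simp: significant_def)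
  have A1: "HB_arrow u [a] [e]"
  proof -
    have "fol u [e] \<subseteq> fol u [a, e]" using subC[OF st a] ee e(3) by (simp add: e_def)
    hence "\<not> significant u [a, e]" by (auto simp: significant_def)
    hence "sig u ([a] @ [e]) = [e]" using sig_drop1 se by simp
    thus ?thesis using sa se ae unfolding HB_arrow_def by (metis append_Cons append_Nil)
  qed
  have A2: "HB_arrow u [a] [a, a]"
  proof -
    obtain x where x: "x \<noteq> []" "hd x = a" "e # x \<in> lang u" "(1 - e) # x \<notin> lang u"
      using word_P[OF st e(1) ea] by blast
    obtain y where "y \<in> fol u [a]" "y \<notin> fol u [a, a]"
      using strictA[OF st x(1,2,3)] x(4) e(3) by auto
    hence "fol u [a, a] \<subset> fol u [a]" using subB by blast
    hence s: "significant u [a, a]" using aa by (simp add: significant_def)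
    thus ?thesis using sa aa sig_self[OF s] unfolding HB_arrow_def by (metis append_Cons append_Nil)
  qed
  have A3: "HB_arrow u [e] [e, a]"
  proof -
    obtain x where x: "x \<noteq> []" "hd x = a" "a # x \<in> lang u" "(1 - a) # x \<notin> lang u"
      using word_P[OF st a aa] by blast
    obtain y where "y \<in> fol u [a]" "y \<notin> fol u [e, a]"
      using strictA[OF st x(1,2,3)] x(4) by (auto simp: e_def)
    hence "fol u [e, a] \<subset> fol u [a]" using subB by blast
    hence s: "significant u [e, a]" using ea by (simp add: significant_def)
    thus ?thesis using se ea sig_self[OF s] unfolding HB_arrow_def by (metis append_Cons append_Nil)
  qed
  show ?thesis using A1 A2 A3 by (simp add: e_def)
qed

theorem lemma4p8:
  fixes u l :: "nat \<Rightarrow> nat"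
  assumes "sturmian u"
    and "left_special_seq u l"
  shows "(l 1 = 0 \<longrightarrow> HB_arrow u [0] [1] \<and> HB_arrow u [0] [0,0] \<and> HB_arrow u [1] [1,0]) \<and>
         (l 1 = 1 \<longrightarrow> HB_arrow u [1] [0] \<and> HB_arrow u [1] [1,1] \<and> HB_arrow u [0] [0,1])"
proof -
  have "[0, l 1] \<in> lang u" "[1, l 1] \<in> lang u"
    using assms(2) unfolding left_special_seq_def by (auto dest: spec[of _ 1])
  thus ?thesis using main_a[OF assms(1), of "l 1"] by auto
qed

end
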